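(* Let $\pi_2$ be the five-dimensional complex associative algebra with basis $e_1,\dots,e_5$ and nonzero products $e_1e_1=e_2$, $e_1e_2=e_2e_1=e_3$, $e_1e_4=e_4e_1=e_5$, $e_4e_4=e_5$ (all other products of basis elements are zero). A linear operator on $\pi_2$ is a local derivation if and only if its matrix has the form $$\begin{pmatrix} b_{11} & 0 & 0 & 0 & 0 \\ b_{21} & b_{22} & 0 & 0 & 0 \\ b_{31} & b_{32} & b_{33} & b_{34} & 0 \\ b_{41} & 0 & 0 & b_{41}+b_{11} & 0 \\ b_{51} & b_{52} & 0 & b_{54} & b_{22}+b_{52} \end{pmatrix}$$ with $b_{11},b_{21},b_{22},b_{31},b_{32},b_{33},b_{34},b_{41},b_{51},b_{52},b_{54}\in\mathbb{C}$.
   Context: The matrix of a linear operator $T$ is taken with respect to the basis $e_1,\dots,e_5$, with the $j$-th column giving the coordinates of $T(e_j)$. A derivation of an algebra $A$ is a linear map $D$ with $D(xy)=D(x)y+xD(y)$ for all $x,y\in A$. A linear map $\nabla:A\to A$ is a local derivation if for every $x\in A$ there is a derivation $D_x$ of $A$ (depending on $x$) with $\nabla(x)=D_x(x)$. *)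

theory Defs
  imports "HOL-Analysis.Analysis"
begin

datatype idx = E1 | E2 | E3 | E4 | E5

lemma UNIV_idx: "(UNIV :: idx set) = {E1, E2, E3, E4, E5}"
  by (auto intro: idx.exhaust)

instance idx :: finite
  by standard (simp add: UNIV_idx)

type_synonym pi2 = "complex ^ idx"

abbreviation e :: "idx \<Rightarrow> pi2" where "e k \<equiv> axis k 1"

fun basis_prod :: "idx \<Rightarrow> idx \<Rightarrow> pi2" where
  "basis_prod E1 E1 = e E2"
| "basis_prod E1 E2 = e E3"
| "basis_prod E2 E1 = e E3"
| "basis_prod E1 E4 = e E5"
| "basis_prod E4 E1 = e E5"
| "basis_prod E4 E4 = e E5"
| "basis_prod _ _ = 0"

definition pi2_mult :: "pi2 \<Rightarrow> pi2 \<Rightarrow> pi2" where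
  "pi2_mult x y = (\<Sum>i\<in>UNIV. \<Sum>j\<in>UNIV. (x $ i * y $ j) *s basis_prod i j)"

definition clinear_map :: "(pi2 \<Rightarrow> pi2) \<Rightarrow> bool" where
  "clinear_map f \<longleftrightarrow> Vector_Spaces.linear (*s) (*s) f"

definition derivation :: "(pi2 \<Rightarrow> pi2) \<Rightarrow> bool" where
  "derivation D \<longleftrightarrow> clinear_map D \<and>
     (\<forall>x y. D (pi2_mult x y) = pi2_mult (D x) y + pi2_mult x (D y))"

definition local_derivation :: "(pi2 \<Rightarrow> pi2) \<Rightarrow> bool" where
  "local_derivation N \<longleftrightarrow> clinear_map N \<and>
     (\<forall>x. \<exists>D. derivation D \<and> N x = D x)"

fun idx_nat :: "idx \<Rightarrow> nat" where
  "idx_nat E1 = 0" | "idx_nat E2 = 1" | "idx_nat E3 = 2" | "idx_nat E4 = 3" | "idx_nat E5 = 4"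

definition mat_of_rows :: "complex list list \<Rightarrow> complex ^ idx ^ idx" where
  "mat_of_rows rs = (\<chi> i j. rs ! idx_nat i ! idx_nat j)"

end

theory Submission imports Defs begin

lemma all_idx: "(\<forall>i. P i) \<longleftrightarrow> P E1 \<and> P E2 \<and> P E3 \<and> P E4 \<and> P E5"
  apply (rule iffI)
   apply simp
  apply (rule allI)
  subgoal for i by (cases i) simp_all
  done

lemma vec_eq_idx: "(v::'a^idx) = w \<longleftrightarrow> v$E1 = w$E1 \<and> v$E2 = w$E2 \<and> v$E3 = w$E3 \<and> v$E4 = w$E4 \<and> v$E5 = w$E5"
  by (simp only: vec_eq_iff all_idx)

lemma sum_idx: "(\<Sum>i\<in>UNIV. f i) = f E1 + f E2 + f E3 + f E4 + (f E5 :: 'a::comm_monoid_add)"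
  by (simp add: UNIV_idx add.assoc)

lemma mv_comp: "(M *v x) $ i = M$i$E1 * x$E1 + M$i$E2 * x$E2 + M$i$E3 * x$E3 + M$i$E4 * x$E4 + M$i$E5 * x$E5"
  by (simp only: matrix_vector_mult_def vec_lambda_beta sum_idx)

lemma pm_gen: "pi2_mult x y $ k = (\<Sum>i\<in>UNIV. \<Sum>j\<in>UNIV. (x $ i * y $ j) * basis_prod i j $ k)"
  by (simp add: pi2_mult_def sum_component)

lemma pm1: "pi2_mult x y $ E1 = 0"
  and pm2: "pi2_mult x y $ E2 = x$E1 * y$E1"
  and pm3: "pi2_mult x y $ E3 = x$E1 * y$E2 + x$E2 * y$E1"
  and pm4: "pi2_mult x y $ E4 = 0"
  and pm5: "pi2_mult x y $ E5 = x$E1 * y$E4 + x$E4 * y$E1 + x$E4 * y$E4"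
  by (simp_all add: pm_gen sum_idx axis_def)

definition Dm :: "complex \<Rightarrow> complex \<Rightarrow> complex \<Rightarrow> complex \<Rightarrow> complex \<Rightarrow> complex \<Rightarrow> complex \<Rightarrow> complex^idx^idx" where
  "Dm a b c f g h k = mat_of_rows
    [[a,0,0,0,0],[b,2*a,0,0,0],[c,2*b,3*a,h,0],[f,0,0,a+f,0],[g,2*f,0,k,2*a+2*f]]"

lemma Dm_mv1: "(Dm a b c f g h k *v x) $ E1 = a * x$E1"
  and Dm_mv2: "(Dm a b c f g h k *v x) $ E2 = b * x$E1 + 2*a*x$E2"
  and Dm_mv3: "(Dm a b c f g h k *v x) $ E3 = c*x$E1 + 2*b*x$E2 + 3*a*x$E3 + h*x$E4"
  and Dm_mv4: "(Dm a b c f g h k *v x) $ E4 = f*x$E1 + (a+f)*x$E4"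
  and Dm_mv5: "(Dm a b c f g h k *v x) $ E5 = g*x$E1 + 2*f*x$E2 + k*x$E4 + (2*a+2*f)*x$E5"
  by (simp_all add: mv_comp Dm_def mat_of_rows_def)

lemmas Dm_mv = Dm_mv1 Dm_mv2 Dm_mv3 Dm_mv4 Dm_mv5
lemmas pm = pm1 pm2 pm3 pm4 pm5

lemma Dm_deriv: "derivation ((*v) (Dm a b c f g h k))"
  unfolding derivation_def clinear_map_def
  apply (simp only: vec_eq_idx Dm_mv pm vector_add_component matrix_vector_mul_linear_gen simp_thms)
  apply (intro allI conjI)
  apply (simp_all add: algebra_simps)
  done


lemma deriv_form:
  assumes "derivation ((*v) M)"
  shows "M = Dm (M$E1$E1) (M$E2$E1) (M$E3$E1) (M$E4$E1) (M$E5$E1) (M$E3$E4) (M$E5$E4)"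
proof -
  have r: "\<And>x y. M *v pi2_mult x y = pi2_mult (M *v x) y + pi2_mult x (M *v y)"
    using assms unfolding derivation_def by blast
  have q: "\<And>i j. M *v pi2_mult (e i) (e j) = pi2_mult (M *v e i) (e j) + pi2_mult (e i) (M *v e j)"
    using r by blast
  note qq = q[unfolded vec_eq_idx, simplified mv_comp pm vector_add_component axis_def vec_lambda_beta]
  note e11 = qq[of E1 E1]
  note e12 = qq[of E1 E2]
  note e14 = qq[of E1 E4]
  note e44 = qq[of E4 E4]
  note e24 = qq[of E2 E4]
  show ?thesis
    using e11 e12 e14 e44 e24
    apply (simp add: vec_eq_iff all_idx Dm_def mat_of_rows_def)
    apply (elim conjE)
    apply (simp add: algebra_simps)
    apply (metis distrib_left)
    done
qed

lemma if_dir: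
  fixes x :: pi2
  shows "\<exists>a b c f g h k. mat_of_rows
         [[b11, 0,   0,   0,         0],
          [b21, b22, 0,   0,         0],
          [b31, b32, b33, b34,       0],
          [b41, 0,   0,   b41 + b11, 0],
          [b51, b52, 0,   b54,       b22 + b52]] *v x = Dm a b c f g h k *v x"
proof -
  define x1 where "x1 = x$E1"
  define x2 where "x2 = x$E2"
  define x3 where "x3 = x$E3"
  define x4 where "x4 = x$E4"
  define x5 where "x5 = x$E5"
  define r3 where "r3 = b31*x1 + b32*x2 + b33*x3 + b34*x4"
  define r5 where "r5 = b51*x1 + b52*x2 + b54*x4 + (b22+b52)*x5"
  note defs = x1_def[symmetric] x2_def[symmetric] x3_def[symmetric] x4_def[symmetric] x5_def[symmetric]
  have red: "\<And>a b c f g h k. (mat_of_rows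
         [[b11, 0,   0,   0,         0],
          [b21, b22, 0,   0,         0],
          [b31, b32, b33, b34,       0],
          [b41, 0,   0,   b41 + b11, 0],
          [b51, b52, 0,   b54,       b22 + b52]] *v x = Dm a b c f g h k *v x) \<longleftrightarrow>
     b11*x1 = a*x1 \<and> b21*x1 + b22*x2 = b*x1 + 2*a*x2 \<and>
     r3 = c*x1 + 2*b*x2 + 3*a*x3 + h*x4 \<and>
     b41*x1 + (b41+b11)*x4 = f*x1 + (a+f)*x4 \<and>
     r5 = g*x1 + 2*f*x2 + k*x4 + (2*a+2*f)*x5"
    unfolding vec_eq_idx Dm_mv r3_def r5_def
    by (simp add: mv_comp mat_of_rows_def defs)
  show ?thesis
  proof (cases "x1 = 0")
    case False
    define b where "b = (b21*x1 + b22*x2 - 2*b11*x2)/x1"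
    show ?thesis
      unfolding red apply (rule exI[of _ b11], rule exI[of _ b], rule exI[of _ "(r3 - 2*b*x2 - 3*b11*x3)/x1"],
        rule exI[of _ b41], rule exI[of _ "(r5 - 2*b41*x2 - (2*b11+2*b41)*x5)/x1"],
        rule exI[of _ 0], rule exI[of _ 0])
      using False by (simp add: b_def field_simps)
  next
    case x1: True
    show ?thesis
    proof (cases "x4 = 0")
      case False
      define a where "a = b22/2"
      define f where "f = b41+b11-b22/2"
      show ?thesis
        unfolding red apply (rule exI[of _ a], rule exI[of _ 0], rule exI[of _ 0],
          rule exI[of _ f], rule exI[of _ 0], rule exI[of _ "(r3 - 3*a*x3)/x4"],
          rule exI[of _ "(r5 - 2*f*x2 - (2*a+2*f)*x5)/x4"])
        using False x1 by (simp add: a_def f_def field_simps)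
    next
      case x4: True
      show ?thesis
      proof (cases "x2 = 0")
        case False
        define a where "a = b22/2"
        show ?thesis
          unfolding red apply (rule exI[of _ a], rule exI[of _ "(r3 - 3*a*x3)/(2*x2)"], rule exI[of _ 0],
            rule exI[of _ "b52/2"], rule exI[of _ 0], rule exI[of _ 0], rule exI[of _ 0])
          using False x1 x4 by (simp add: a_def r3_def r5_def field_simps)
      next
        case x2: True
        show ?thesis
          unfolding red apply (rule exI[of _ "b33/3"], rule exI[of _ 0], rule exI[of _ 0],
            rule exI[of _ "(b22+b52)/2 - b33/3"], rule exI[of _ 0], rule exI[of _ 0], rule exI[of _ 0])
          using x1 x2 x4 by (simp add: r3_def r5_def field_simps)
      qed
    qed
  qed
qed

lemma lin_mat: "clinear_map D \<Longrightarrow> D = (*v) (matrix D)"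
  by (simp add: fun_eq_iff matrix_works clinear_map_def)

theorem theorem5p2:
  fixes T :: "pi2 \<Rightarrow> pi2"
  assumes "clinear_map T"
  shows "local_derivation T \<longleftrightarrow>
    (\<exists>b11 b21 b22 b31 b32 b33 b34 b41 b51 b52 b54 :: complex.
       matrix T = mat_of_rows
         [[b11, 0,   0,   0,         0],
          [b21, b22, 0,   0,         0],
          [b31, b32, b33, b34,       0],
          [b41, 0,   0,   b41 + b11, 0],
          [b51, b52, 0,   b54,       b22 + b52]])"
proof
  have Tm: "T = (*v) (matrix T)" using assms by (rule lin_mat)
  assume L: "local_derivation T"
  have ex: "\<exists>a b c f g h k. matrix T *v x = Dm a b c f g h k *v x" for x
  proof -
    obtain D where D: "derivation D" "T x = D x" using L unfolding local_derivation_def by blast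
    have "clinear_map D" using D(1) unfolding derivation_def by blast
    then have DM: "D = (*v) (matrix D)" by (rule lin_mat)
    with D(1) have "derivation ((*v) (matrix D))" by simp
    then have "matrix D = Dm (matrix D$E1$E1) (matrix D$E2$E1) (matrix D$E3$E1) (matrix D$E4$E1)
       (matrix D$E5$E1) (matrix D$E3$E4) (matrix D$E5$E4)" by (rule deriv_form)
    then have "D x = Dm (matrix D$E1$E1) (matrix D$E2$E1) (matrix D$E3$E1) (matrix D$E4$E1)
       (matrix D$E5$E1) (matrix D$E3$E4) (matrix D$E5$E4) *v x" using DM by metis
    moreover have "T x = matrix T *v x" using Tm by metis
    ultimately show ?thesis using D(2) by metis
  qed
  define m where "m = matrix T"
  have ex': "\<exists>a b c f g h k. m *v x = Dm a b c f g h k *v x" for x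
    unfolding m_def by (rule ex)
  note w = ex'[unfolded vec_eq_idx Dm_mv, simplified mv_comp axis_def vec_lambda_beta
      vector_minus_component]
  have w1: "m$E1$E2 = 0 \<and> m$E4$E2 = 0" using w[of "e E2"] by (auto simp: axis_def)
  have w2: "m$E1$E3 = 0 \<and> m$E2$E3 = 0 \<and> m$E4$E3 = 0 \<and> m$E5$E3 = 0" using w[of "e E3"] by (auto simp: axis_def)
  have w3: "m$E1$E4 = 0 \<and> m$E2$E4 = 0" using w[of "e E4"] by (auto simp: axis_def)
  have w4: "m$E1$E5 = 0 \<and> m$E2$E5 = 0 \<and> m$E3$E5 = 0 \<and> m$E4$E5 = 0" using w[of "e E5"] by (auto simp: axis_def)
  have w5: "m$E4$E4 = m$E4$E1 + m$E1$E1" using w[of "e E1 - e E4"] w3 by (auto simp: axis_def algebra_simps)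
  have w6: "m$E5$E5 = m$E2$E2 + m$E5$E2" using w[of "e E2 - e E5"] w4 by (auto simp: axis_def algebra_simps)
  show "\<exists>b11 b21 b22 b31 b32 b33 b34 b41 b51 b52 b54 :: complex.
       matrix T = mat_of_rows
         [[b11, 0,   0,   0,         0],
          [b21, b22, 0,   0,         0],
          [b31, b32, b33, b34,       0],
          [b41, 0,   0,   b41 + b11, 0],
          [b51, b52, 0,   b54,       b22 + b52]]"
    apply (rule exI[of _ "m$E1$E1"], rule exI[of _ "m$E2$E1"], rule exI[of _ "m$E2$E2"],
      rule exI[of _ "m$E3$E1"], rule exI[of _ "m$E3$E2"], rule exI[of _ "m$E3$E3"],
      rule exI[of _ "m$E3$E4"], rule exI[of _ "m$E4$E1"], rule exI[of _ "m$E5$E1"],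
      rule exI[of _ "m$E5$E2"], rule exI[of _ "m$E5$E4"])
    unfolding m_def[symmetric]
    using w1 w2 w3 w4 w5 w6
    by (simp add: vec_eq_iff all_idx mat_of_rows_def)
next
  assume "\<exists>b11 b21 b22 b31 b32 b33 b34 b41 b51 b52 b54 :: complex.
       matrix T = mat_of_rows
         [[b11, 0,   0,   0,         0],
          [b21, b22, 0,   0,         0],
          [b31, b32, b33, b34,       0],
          [b41, 0,   0,   b41 + b11, 0],
          [b51, b52, 0,   b54,       b22 + b52]]"
  then obtain b11 b21 b22 b31 b32 b33 b34 b41 b51 b52 b54 where M: "matrix T = mat_of_rows
         [[b11, 0,   0,   0,         0],
          [b21, b22, 0,   0,         0],
          [b31, b32, b33, b34,       0],
          [b41, 0,   0,   b41 + b11, 0],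
          [b51, b52, 0,   b54,       b22 + b52]]" by blast
  have Tm: "T = (*v) (matrix T)" using assms by (rule lin_mat)
  show "local_derivation T"
    unfolding local_derivation_def
  proof (intro conjI allI)
    show "clinear_map T" by (rule assms)
    fix x
    obtain a b c f g h k where "matrix T *v x = Dm a b c f g h k *v x"
      using if_dir[of b11 b21 b22 b31 b32 b33 b34 b41 b51 b52 b54 x] M by metis
    then have "T x = Dm a b c f g h k *v x" using Tm by metis
    then show "\<exists>D. derivation D \<and> T x = D x" using Dm_deriv by blast
  qed
qed

end
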